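(* Let $(M,J,c)$ be a conformal almost Hermitian structure of dimension $n\ge4$ and let $\nabla^W$ be a Weyl connection, i.e. a torsion-free affine connection such that for each $g\in c$ there is a 1-form $B$ with $\nabla^W_ag_{bc}=2B_ag_{bc}$. Let $G^W(X,Y):=-\frac12J(\nabla^W_YJ)X$. Then the following are equivalent: (i) $\nabla^W$ is compatible with $J$, i.e. $\nabla^W_aJ^a{}_b=0$; (ii) $G^W$ is totally trace-free; (iii) $JG^W$ is totally trace-free; (iv) $(X,Y)\mapsto G^W(X,JY)$ is totally trace-free; (v) $(X,Y)\mapsto G^W(JX,JY)$ is totally trace-free. Moreover, when these hold, $\nabla^W=\nabla^c$.
   Context: A conformal almost Hermitian structure: $J$ almost complex ($J^2=-\mathrm{id}$), $c$ a conformal class of Riemannian metrics for which $J$ is orthogonal. A $(1,2)$ tensor $H^a{}_{bc}$ is totally trace-free if all contractions vanish: $H^a{}_{ab}=0$, $H^a{}_{ba}=0$, and $g^{bc}H^a{}_{bc}=0$ for $g\in c$. $\nabla^c$ denotes the canonical Weyl connection: for $g\in c$ with Levi-Civita connection $\nabla$, $B_a:=\frac1{n-2}J^c{}_b\nabla_cJ^b{}_a$ and $\nabla^c_aY^b:=\nabla_aY^b-B_aY^b+B^bY_a-B_cY^c\delta^b_a$; this is independent of $g\in c$. *)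

theory Defs
  imports "HOL-Analysis.Analysis"
begin

text \<open>Local model: M is an open set U in real^'n (one coordinate chart); tensor
fields are given by their coordinate components, indexed by the finite type 'n.
Index conventions: J x a b = J^a_b; g x a b = g_ab;
Gam x a b c = Gamma^a_bc with nabla_a Y^b = d_a Y^b + Gamma^b_ac Y^c.\<close>

definition pd :: "(real^'n \<Rightarrow> real) \<Rightarrow> real^'n \<Rightarrow> 'n \<Rightarrow> real" where
  "pd f x i = frechet_derivative f (at x) (axis i 1)"

definition metric_mat :: "(real^'n \<Rightarrow> 'n \<Rightarrow> 'n \<Rightarrow> real) \<Rightarrow> real^'n \<Rightarrow> real^'n^'n" where
  "metric_mat g x = (\<chi> i j. g x i j)"

definition ginv :: "(real^'n \<Rightarrow> 'n \<Rightarrow> 'n \<Rightarrow> real) \<Rightarrow> real^'n \<Rightarrow> 'n \<Rightarrow> 'n \<Rightarrow> real" where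
  "ginv g x a b = matrix_inv (metric_mat g x) $ a $ b"

definition lc_christoffel :: "(real^'n \<Rightarrow> 'n \<Rightarrow> 'n \<Rightarrow> real) \<Rightarrow> real^'n \<Rightarrow> 'n \<Rightarrow> 'n \<Rightarrow> 'n \<Rightarrow> real" where
  "lc_christoffel g x a b c = (1/2) * (\<Sum>d\<in>UNIV. ginv g x a d *
     (pd (\<lambda>y. g y d c) x b + pd (\<lambda>y. g y d b) x c - pd (\<lambda>y. g y b c) x d))"

definition cov_J :: "(real^'n \<Rightarrow> 'n \<Rightarrow> 'n \<Rightarrow> 'n \<Rightarrow> real) \<Rightarrow> (real^'n \<Rightarrow> 'n \<Rightarrow> 'n \<Rightarrow> real)
     \<Rightarrow> real^'n \<Rightarrow> 'n \<Rightarrow> 'n \<Rightarrow> 'n \<Rightarrow> real" where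
  "cov_J Gam J x a b c = pd (\<lambda>y. J y b c) x a + (\<Sum>d\<in>UNIV. Gam x b a d * J x d c)
     - (\<Sum>d\<in>UNIV. Gam x d a c * J x b d)"

definition cov_g :: "(real^'n \<Rightarrow> 'n \<Rightarrow> 'n \<Rightarrow> 'n \<Rightarrow> real) \<Rightarrow> (real^'n \<Rightarrow> 'n \<Rightarrow> 'n \<Rightarrow> real)
     \<Rightarrow> real^'n \<Rightarrow> 'n \<Rightarrow> 'n \<Rightarrow> 'n \<Rightarrow> real" where
  "cov_g Gam g x a b c = pd (\<lambda>y. g y b c) x a - (\<Sum>d\<in>UNIV. Gam x d a b * g x d c)
     - (\<Sum>d\<in>UNIV. Gam x d a c * g x b d)"

definition conformal_almost_hermitian ::
  "(real^'n) set \<Rightarrow> (real^'n \<Rightarrow> 'n \<Rightarrow> 'n \<Rightarrow> real) \<Rightarrow> (real^'n \<Rightarrow> 'n \<Rightarrow> 'n \<Rightarrow> real) \<Rightarrow> bool" where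
  "conformal_almost_hermitian U g J \<longleftrightarrow> open U \<and>
     (\<forall>x\<in>U.
        (\<forall>a b. g x a b = g x b a) \<and>
        (\<forall>v::real^'n. v \<noteq> 0 \<longrightarrow> (\<Sum>a\<in>UNIV. \<Sum>b\<in>UNIV. g x a b * v$a * v$b) > 0) \<and>
        (\<forall>a c. (\<Sum>b\<in>UNIV. J x a b * J x b c) = (if a = c then -1 else 0)) \<and>
        (\<forall>c d. (\<Sum>a\<in>UNIV. \<Sum>b\<in>UNIV. g x a b * J x a c * J x b d) = g x c d) \<and>
        (\<forall>a b. (\<lambda>y. g y a b) differentiable (at x)) \<and>
        (\<forall>a b. (\<lambda>y. J y a b) differentiable (at x)))"

definition weyl_connection ::
  "(real^'n) set \<Rightarrow> (real^'n \<Rightarrow> 'n \<Rightarrow> 'n \<Rightarrow> real) \<Rightarrow> (real^'n \<Rightarrow> 'n \<Rightarrow> 'n \<Rightarrow> 'n \<Rightarrow> real) \<Rightarrow> bool" where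
  "weyl_connection U g Gam \<longleftrightarrow>
     (\<forall>x\<in>U. \<forall>a b c. Gam x a b c = Gam x a c b) \<and>
     (\<exists>B :: real^'n \<Rightarrow> 'n \<Rightarrow> real. \<forall>x\<in>U. \<forall>a b c. cov_g Gam g x a b c = 2 * B x a * g x b c)"

text \<open>G^W(X,Y) = -1/2 J (nabla_Y J) X; G_tensor Gam J x d b c = G^d_bc, G(X,Y)^d = G^d_bc X^b Y^c\<close>
definition G_tensor :: "(real^'n \<Rightarrow> 'n \<Rightarrow> 'n \<Rightarrow> 'n \<Rightarrow> real) \<Rightarrow> (real^'n \<Rightarrow> 'n \<Rightarrow> 'n \<Rightarrow> real)
     \<Rightarrow> real^'n \<Rightarrow> 'n \<Rightarrow> 'n \<Rightarrow> 'n \<Rightarrow> real" where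
  "G_tensor Gam J x d b c = - (1/2) * (\<Sum>e\<in>UNIV. J x d e * cov_J Gam J x c e b)"

definition JG_tensor where
  "JG_tensor Gam J x d b c = (\<Sum>e\<in>UNIV. J x d e * G_tensor Gam J x e b c)"

definition GJ2_tensor where
  "GJ2_tensor Gam J x d b c = (\<Sum>e\<in>UNIV. G_tensor Gam J x d b e * J x e c)"

definition GJJ_tensor where
  "GJJ_tensor Gam J x d b c =
     (\<Sum>e\<in>UNIV. \<Sum>f\<in>UNIV. G_tensor Gam J x d e f * J x e b * J x f c)"

definition totally_trace_free ::
  "(real^'n \<Rightarrow> 'n \<Rightarrow> 'n \<Rightarrow> real) \<Rightarrow> real^'n \<Rightarrow> ('n \<Rightarrow> 'n \<Rightarrow> 'n \<Rightarrow> real) \<Rightarrow> bool" where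
  "totally_trace_free g x H \<longleftrightarrow>
     (\<forall>b. (\<Sum>a\<in>UNIV. H a a b) = 0) \<and>
     (\<forall>b. (\<Sum>a\<in>UNIV. H a b a) = 0) \<and>
     (\<forall>a. (\<Sum>b\<in>UNIV. \<Sum>c\<in>UNIV. ginv g x b c * H a b c) = 0)"

definition canon_B :: "(real^'n \<Rightarrow> 'n \<Rightarrow> 'n \<Rightarrow> real) \<Rightarrow> (real^'n \<Rightarrow> 'n \<Rightarrow> 'n \<Rightarrow> real)
     \<Rightarrow> real^'n \<Rightarrow> 'n \<Rightarrow> real" where
  "canon_B g J x a = (1 / (real CARD('n) - 2)) *
     (\<Sum>c\<in>UNIV. \<Sum>b\<in>UNIV. J x c b * cov_J (lc_christoffel g) J x c b a)"

definition canon_christoffel :: "(real^'n \<Rightarrow> 'n \<Rightarrow> 'n \<Rightarrow> real) \<Rightarrow> (real^'n \<Rightarrow> 'n \<Rightarrow> 'n \<Rightarrow> real)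
     \<Rightarrow> real^'n \<Rightarrow> 'n \<Rightarrow> 'n \<Rightarrow> 'n \<Rightarrow> real" where
  "canon_christoffel g J x b a c =
     lc_christoffel g x b a c
     - canon_B g J x a * (if b = c then 1 else 0)
     + (\<Sum>d\<in>UNIV. ginv g x b d * canon_B g J x d) * g x a c
     - canon_B g J x c * (if b = a then 1 else 0)"

end

theory Submission
  imports Defs
begin


lemma delta_l[simp]: "(\<Sum>e\<in>(UNIV::'n::finite set). (if e = a then 1 else 0) * (f e::real)) = f a"
  by (simp add: if_distrib[of "\<lambda>t. t * _"] cong: if_cong)
lemma delta_l'[simp]: "(\<Sum>e\<in>(UNIV::'n::finite set). (if a = e then 1 else 0) * (f e::real)) = f a"
  by (simp add: if_distrib[of "\<lambda>t. t * _"] cong: if_cong)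
lemma delta_r[simp]: "(\<Sum>e\<in>(UNIV::'n::finite set). (f e::real) * (if e = a then 1 else 0)) = f a"
  by (simp add: if_distrib[of "\<lambda>t. _ * t"] cong: if_cong)
lemma delta_r'[simp]: "(\<Sum>e\<in>(UNIV::'n::finite set). (f e::real) * (if a = e then 1 else 0)) = f a"
  by (simp add: if_distrib[of "\<lambda>t. _ * t"] cong: if_cong)
lemma mdelta_l[simp]: "(\<Sum>e\<in>(UNIV::'n::finite set). (if e = a then -1 else 0) * (f e::real)) = - f a"
  by (simp add: if_distrib[of "\<lambda>t. t * _"] cong: if_cong)
lemma mdelta_r[simp]: "(\<Sum>e\<in>(UNIV::'n::finite set). (f e::real) * (if e = a then -1 else 0)) = - f a"
  by (simp add: if_distrib[of "\<lambda>t. _ * t"] cong: if_cong)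
lemma mdelta_l'[simp]: "(\<Sum>e\<in>(UNIV::'n::finite set). (if a = e then -1 else 0) * (f e::real)) = - f a"
  by (simp add: if_distrib[of "\<lambda>t. t * _"] cong: if_cong)
lemma mdelta_r'[simp]: "(\<Sum>e\<in>(UNIV::'n::finite set). (f e::real) * (if a = e then -1 else 0)) = - f a"
  by (simp add: if_distrib[of "\<lambda>t. _ * t"] cong: if_cong)

lemma swap4: "(\<Sum>b\<in>A. \<Sum>c\<in>B. \<Sum>e\<in>C. \<Sum>f\<in>D. F b c e f) = (\<Sum>e\<in>C. \<Sum>f\<in>D. \<Sum>b\<in>A. \<Sum>c\<in>B. F b c e f)"
proof -
  have "(\<Sum>b\<in>A. \<Sum>c\<in>B. \<Sum>e\<in>C. \<Sum>f\<in>D. F b c e f) = (\<Sum>b\<in>A. \<Sum>e\<in>C. \<Sum>c\<in>B. \<Sum>f\<in>D. F b c e f)"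
    by (rule sum.cong[OF refl], rule sum.swap)
  also have "\<dots> = (\<Sum>b\<in>A. \<Sum>e\<in>C. \<Sum>f\<in>D. \<Sum>c\<in>B. F b c e f)"
    by (rule sum.cong[OF refl], rule sum.cong[OF refl], rule sum.swap)
  also have "\<dots> = (\<Sum>e\<in>C. \<Sum>b\<in>A. \<Sum>f\<in>D. \<Sum>c\<in>B. F b c e f)"
    by (rule sum.swap)
  also have "\<dots> = (\<Sum>e\<in>C. \<Sum>f\<in>D. \<Sum>b\<in>A. \<Sum>c\<in>B. F b c e f)"
    by (rule sum.cong[OF refl], rule sum.swap)
  finally show ?thesis .
qed

lemma swap3: "(\<Sum>b\<in>A. \<Sum>e\<in>B. \<Sum>c\<in>C. F b e c) = (\<Sum>c\<in>C. \<Sum>e\<in>B. \<Sum>b\<in>A. F b e c)"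
proof -
  have "(\<Sum>b\<in>A. \<Sum>e\<in>B. \<Sum>c\<in>C. F b e c) = (\<Sum>e\<in>B. \<Sum>b\<in>A. \<Sum>c\<in>C. F b e c)"
    by (rule sum.swap)
  also have "\<dots> = (\<Sum>e\<in>B. \<Sum>c\<in>C. \<Sum>b\<in>A. F b e c)"
    by (rule sum.cong[OF refl], rule sum.swap)
  also have "\<dots> = (\<Sum>c\<in>C. \<Sum>e\<in>B. \<Sum>b\<in>A. F b e c)"
    by (rule sum.swap)
  finally show ?thesis .
qed

locale palg =
  fixes g gi J :: "'n::finite \<Rightarrow> 'n \<Rightarrow> real"
  assumes gsym: "g a b = g b a"
    and gisym: "gi a b = gi b a"
    and gig: "(\<Sum>d\<in>UNIV. gi a d * g d c) = (if a = c then 1 else 0)"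
    and ggi: "(\<Sum>d\<in>UNIV. g a d * gi d c) = (if a = c then 1 else 0)"
    and JJ: "(\<Sum>b\<in>UNIV. J a b * J b c) = (if a = c then -1 else 0)"
    and om: "(\<Sum>d\<in>UNIV. g b d * J d c) = - (\<Sum>d\<in>UNIV. g c d * J d b)"
begin

definition P1 :: "('n \<Rightarrow> 'n \<Rightarrow> 'n \<Rightarrow> real) \<Rightarrow> bool" where
  "P1 T \<longleftrightarrow> (\<forall>k b c. (\<Sum>e\<in>UNIV. T k b e * J e c) + (\<Sum>e\<in>UNIV. J b e * T k e c) = 0)"
definition P2 :: "('n \<Rightarrow> 'n \<Rightarrow> 'n \<Rightarrow> real) \<Rightarrow> bool" where
  "P2 T \<longleftrightarrow> (\<forall>k b c. (\<Sum>d\<in>UNIV. g b d * T k d c) + (\<Sum>d\<in>UNIV. g c d * T k d b) = 0)"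

lemma trJT:
  assumes "P1 T" shows "(\<Sum>a\<in>UNIV. \<Sum>e\<in>UNIV. J a e * T k e a) = 0"
proof -
  have "(\<Sum>a\<in>UNIV. (\<Sum>e\<in>UNIV. T k a e * J e a) + (\<Sum>e\<in>UNIV. J a e * T k e a)) = 0"
    using assms unfolding P1_def by simp
  moreover have "(\<Sum>a\<in>UNIV. \<Sum>e\<in>UNIV. T k a e * J e a) = (\<Sum>a\<in>UNIV. \<Sum>e\<in>UNIV. J a e * T k e a)"
    by (subst sum.swap) (simp add: mult.commute)
  ultimately show ?thesis by (simp add: sum.distrib)
qed

lemma tr2:
  assumes "P1 T"
  shows "(\<Sum>a\<in>UNIV. \<Sum>e\<in>UNIV. J a e * T a e b) = - (\<Sum>e\<in>UNIV. (\<Sum>a\<in>UNIV. T a a e) * J e b)"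
proof -
  have "(\<Sum>a\<in>UNIV. (\<Sum>e\<in>UNIV. T a a e * J e b) + (\<Sum>e\<in>UNIV. J a e * T a e b)) = 0"
    using assms unfolding P1_def by simp
  moreover have "(\<Sum>a\<in>UNIV. \<Sum>e\<in>UNIV. T a a e * J e b) = (\<Sum>e\<in>UNIV. (\<Sum>a\<in>UNIV. T a a e) * J e b)"
    unfolding sum_distrib_right by (rule sum.swap)
  ultimately show ?thesis by (simp add: sum.distrib eq_neg_iff_add_eq_0 add.commute)
qed

lemma trT:
  assumes "P2 T" shows "(\<Sum>a\<in>UNIV. T k a a) = 0"
proof -
  have "(\<Sum>b\<in>UNIV. \<Sum>c\<in>UNIV. gi c b * ((\<Sum>d\<in>UNIV. g b d * T k d c) + (\<Sum>d\<in>UNIV. g c d * T k d b))) = 0"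
    using assms unfolding P2_def by simp
  moreover have "(\<Sum>b\<in>UNIV. \<Sum>c\<in>UNIV. gi c b * (\<Sum>d\<in>UNIV. g b d * T k d c)) = (\<Sum>a\<in>UNIV. T k a a)"
  proof -
    have "(\<Sum>b\<in>UNIV. \<Sum>c\<in>UNIV. gi c b * (\<Sum>d\<in>UNIV. g b d * T k d c))
        = (\<Sum>c\<in>UNIV. \<Sum>d\<in>UNIV. (\<Sum>b\<in>UNIV. gi c b * g b d) * T k d c)"
      unfolding sum_distrib_left sum_distrib_right
      by (subst sum.swap) (subst (2) sum.swap, simp add: mult_ac)
    also have "\<dots> = (\<Sum>a\<in>UNIV. T k a a)" by (simp only: gig) simp
    finally show ?thesis .
  qed
  moreover have "(\<Sum>b\<in>UNIV. \<Sum>c\<in>UNIV. gi c b * (\<Sum>d\<in>UNIV. g c d * T k d b)) = (\<Sum>a\<in>UNIV. T k a a)"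
  proof -
    have "(\<Sum>b\<in>UNIV. \<Sum>c\<in>UNIV. gi c b * (\<Sum>d\<in>UNIV. g c d * T k d b))
        = (\<Sum>b\<in>UNIV. \<Sum>d\<in>UNIV. (\<Sum>c\<in>UNIV. gi b c * g c d) * T k d b)"
      unfolding sum_distrib_left sum_distrib_right
      by (subst (2) sum.swap) (simp add: mult_ac gisym)
    also have "\<dots> = (\<Sum>a\<in>UNIV. T k a a)" by (simp only: gig) simp
    finally show ?thesis .
  qed
  ultimately show ?thesis by (simp add: distrib_left sum.distrib)
qed


lemma P1': "P1 T \<Longrightarrow> (\<Sum>e\<in>UNIV. T k b e * J e c) = - (\<Sum>e\<in>UNIV. J b e * T k e c)"
  by (simp add: P1_def eq_neg_iff_add_eq_0)
lemma P2': "P2 T \<Longrightarrow> (\<Sum>d\<in>UNIV. g b d * T k d c) = - (\<Sum>d\<in>UNIV. g c d * T k d b)"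
  by (simp add: P2_def eq_neg_iff_add_eq_0)

definition th :: "('n \<Rightarrow> 'n \<Rightarrow> 'n \<Rightarrow> real) \<Rightarrow> 'n \<Rightarrow> real" where
  "th T e = (\<Sum>a\<in>UNIV. T a a e)"

lemma contract1: "(\<Sum>b\<in>UNIV. gi b c * (\<Sum>d\<in>UNIV. g b d * X d)) = X c"
proof -
  have "(\<Sum>b\<in>UNIV. gi b c * (\<Sum>d\<in>UNIV. g b d * X d)) = (\<Sum>d\<in>UNIV. (\<Sum>b\<in>UNIV. gi c b * g b d) * X d)"
    unfolding sum_distrib_left sum_distrib_right by (subst sum.swap) (simp add: mult_ac gisym)
  also have "\<dots> = X c" by (simp only: gig) simp
  finally show ?thesis .
qed

lemma contract2: "(\<Sum>b\<in>UNIV. gi c b * (\<Sum>d\<in>UNIV. g b d * X d)) = X c"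
  using contract1[of c X] gisym[of c] by simp

lemma contract3: "(\<Sum>b\<in>UNIV. gi c b * (\<Sum>d\<in>UNIV. g d b * X d)) = X c"
  using contract2[of c X] gsym[of _ ] by simp

lemma contract4: "(\<Sum>b\<in>UNIV. (\<Sum>d\<in>UNIV. X d * g d b) * gi b c) = X c"
  using contract1[of c X] by (simp add: gsym mult_ac)

lemma Tlow:
  assumes "P2 T" shows "T c a b = - (\<Sum>f\<in>UNIV. gi a f * (\<Sum>d\<in>UNIV. g b d * T c d f))"
proof -
  have "T c a b = (\<Sum>f\<in>UNIV. gi a f * (\<Sum>d\<in>UNIV. g f d * T c d b))"
    using contract2[of a "\<lambda>d. T c d b"] by simp
  also have "\<dots> = (\<Sum>f\<in>UNIV. gi a f * (- (\<Sum>d\<in>UNIV. g b d * T c d f)))"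
    by (subst P2'[OF assms]) (rule refl)
  finally show ?thesis by (simp add: sum_negf)
qed

lemma Sform:
  assumes "P2 T" shows "(\<Sum>b\<in>UNIV. \<Sum>c\<in>UNIV. gi b c * T c a b) = - (\<Sum>f\<in>UNIV. gi a f * th T f)"
proof -
  have "(\<Sum>b\<in>UNIV. \<Sum>c\<in>UNIV. gi b c * T c a b)
      = (\<Sum>b\<in>UNIV. \<Sum>c\<in>UNIV. gi b c * (- (\<Sum>f\<in>UNIV. gi a f * (\<Sum>d\<in>UNIV. g b d * T c d f))))"
    by (subst Tlow[OF assms]) (rule refl)
  also have "\<dots> = - (\<Sum>c\<in>UNIV. \<Sum>b\<in>UNIV. gi b c * (\<Sum>d\<in>UNIV. g b d * (\<Sum>f\<in>UNIV. gi a f * T c d f)))"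
  proof -
    have "\<And>b c. (\<Sum>f\<in>UNIV. gi a f * (\<Sum>d\<in>UNIV. g b d * T c d f)) = (\<Sum>d\<in>UNIV. g b d * (\<Sum>f\<in>UNIV. gi a f * T c d f))"
      unfolding sum_distrib_left by (subst sum.swap) (simp add: mult_ac)
    then show ?thesis by (subst sum.swap) (simp add: sum_negf)
  qed
  also have "\<dots> = - (\<Sum>c\<in>UNIV. \<Sum>f\<in>UNIV. gi a f * T c c f)"
    by (simp only: contract1)
  also have "\<dots> = - (\<Sum>f\<in>UNIV. gi a f * th T f)"
    unfolding th_def sum_distrib_left by (subst sum.swap) (rule refl)
  finally show ?thesis .
qed

lemma J_via: "J e c = (\<Sum>d\<in>UNIV. gi e d * (\<Sum>f\<in>UNIV. g d f * J f c))"
  using contract2[of e "\<lambda>f. J f c"] by simp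

lemma Jgi_anti: "(\<Sum>c\<in>UNIV. J e c * gi c b) = - (\<Sum>c\<in>UNIV. J b c * gi c e)"
proof -
  have "(\<Sum>c\<in>UNIV. J e c * gi c b) = (\<Sum>c\<in>UNIV. (\<Sum>d\<in>UNIV. gi e d * (\<Sum>f\<in>UNIV. g d f * J f c)) * gi c b)"
    by (subst J_via) (rule refl)
  also have "\<dots> = (\<Sum>c\<in>UNIV. (\<Sum>d\<in>UNIV. gi e d * - (\<Sum>f\<in>UNIV. g c f * J f d)) * gi c b)"
    by (subst om) (rule refl)
  also have "\<dots> = - (\<Sum>c\<in>UNIV. (\<Sum>d\<in>UNIV. gi e d * (\<Sum>f\<in>UNIV. g c f * J f d)) * gi c b)"
    by (simp add: sum_negf)
  also have "\<dots> = - (\<Sum>d\<in>UNIV. gi e d * (\<Sum>c\<in>UNIV. gi b c * (\<Sum>f\<in>UNIV. g c f * J f d)))"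
    unfolding sum_distrib_left sum_distrib_right
    by (subst sum.swap) (simp add: mult_ac gisym)
  also have "\<dots> = - (\<Sum>d\<in>UNIV. gi e d * J b d)"
    by (simp only: contract2)
  finally show ?thesis by (simp add: gisym mult.commute)
qed

lemma trJ: "(\<Sum>a\<in>UNIV. J a a) = 0"
proof -
  have "(\<Sum>a\<in>UNIV. J a a) = (\<Sum>a\<in>UNIV. \<Sum>d\<in>UNIV. gi a d * (\<Sum>f\<in>UNIV. g d f * J f a))"
    by (subst J_via) (rule refl)
  also have "\<dots> = (\<Sum>a\<in>UNIV. \<Sum>d\<in>UNIV. gi a d * - (\<Sum>f\<in>UNIV. g a f * J f d))"
    by (subst om) (rule refl)
  also have "\<dots> = - (\<Sum>d\<in>UNIV. \<Sum>a\<in>UNIV. gi d a * (\<Sum>f\<in>UNIV. g a f * J f d))"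
    by (subst sum.swap) (simp add: gisym sum_negf)
  also have "\<dots> = - (\<Sum>a\<in>UNIV. J a a)"
    by (subst J_via) (rule refl)
  finally show ?thesis by simp
qed

lemma JJT: "(\<Sum>e\<in>UNIV. J d e * (\<Sum>f\<in>UNIV. J e f * X f)) = - X d"
proof -
  have "(\<Sum>e\<in>UNIV. J d e * (\<Sum>f\<in>UNIV. J e f * X f)) = (\<Sum>f\<in>UNIV. (\<Sum>e\<in>UNIV. J d e * J e f) * X f)"
    unfolding sum_distrib_left sum_distrib_right by (subst sum.swap) (simp add: mult_ac)
  also have "\<dots> = - X d" by (simp only: JJ) simp
  finally show ?thesis .
qed

lemma JTJ:
  assumes "P1 T" shows "(\<Sum>e\<in>UNIV. (\<Sum>h\<in>UNIV. J d h * T f h e) * J e b) = T f d b"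
proof -
  have "(\<Sum>e\<in>UNIV. (\<Sum>h\<in>UNIV. J d h * T f h e) * J e b) = (\<Sum>h\<in>UNIV. J d h * (\<Sum>e\<in>UNIV. T f h e * J e b))"
    unfolding sum_distrib_left sum_distrib_right by (subst sum.swap) (simp add: mult_ac)
  also have "\<dots> = (\<Sum>h\<in>UNIV. J d h * - (\<Sum>e\<in>UNIV. J h e * T f e b))"
    by (simp only: P1'[OF assms])
  also have "\<dots> = T f d b" using JJT[of d "\<lambda>e. T f e b"] by (simp add: sum_negf)
  finally show ?thesis .
qed


definition ttf :: "('n \<Rightarrow> 'n \<Rightarrow> 'n \<Rightarrow> real) \<Rightarrow> bool" where
  "ttf H \<longleftrightarrow> (\<forall>b. (\<Sum>a\<in>UNIV. H a a b) = 0) \<and> (\<forall>b. (\<Sum>a\<in>UNIV. H a b a) = 0) \<and>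
     (\<forall>a. (\<Sum>b\<in>UNIV. \<Sum>c\<in>UNIV. gi b c * H a b c) = 0)"

definition Gt :: "('n \<Rightarrow> 'n \<Rightarrow> 'n \<Rightarrow> real) \<Rightarrow> 'n \<Rightarrow> 'n \<Rightarrow> 'n \<Rightarrow> real" where
  "Gt T d b c = - (1/2) * (\<Sum>e\<in>UNIV. J d e * T c e b)"
definition JGt where "JGt T d b c = (\<Sum>e\<in>UNIV. J d e * Gt T e b c)"
definition GJ2t where "GJ2t T d b c = (\<Sum>e\<in>UNIV. Gt T d b e * J e c)"
definition GJJt where "GJJt T d b c = (\<Sum>e\<in>UNIV. \<Sum>f\<in>UNIV. Gt T d e f * J e b * J f c)"

lemma thJ0: assumes "\<And>b. (\<Sum>e\<in>UNIV. X e * J e b) = 0" shows "X c = 0"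
proof -
  have "(\<Sum>b\<in>UNIV. (\<Sum>e\<in>UNIV. X e * J e b) * J b c) = (\<Sum>e\<in>UNIV. X e * (\<Sum>b\<in>UNIV. J e b * J b c))"
    unfolding sum_distrib_left sum_distrib_right by (subst sum.swap) (simp add: mult_ac)
  also have "\<dots> = - X c" by (simp only: JJ) simp
  finally show ?thesis using assms by simp
qed

lemma trG:
  assumes "P1 T" "P2 T" shows "ttf (Gt T) \<longleftrightarrow> (\<forall>b. th T b = 0)"
proof -
  have t1: "(\<Sum>a\<in>UNIV. Gt T a a b) = 0" for b
    using trJT[OF assms(1), of b] unfolding Gt_def by (simp add: sum_negf sum_divide_distrib[symmetric])
  have t2: "(\<Sum>a\<in>UNIV. Gt T a b a) = (1/2) * (\<Sum>e\<in>UNIV. th T e * J e b)" for b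
    using tr2[OF assms(1), of b] unfolding Gt_def th_def by (simp add: sum_negf sum_divide_distrib[symmetric])
  have t3: "(\<Sum>b\<in>UNIV. \<Sum>c\<in>UNIV. gi b c * Gt T a b c) = (1/2) * (\<Sum>e\<in>UNIV. J a e * (\<Sum>f\<in>UNIV. gi e f * th T f))" for a
  proof -
    have "(\<Sum>b\<in>UNIV. \<Sum>c\<in>UNIV. gi b c * Gt T a b c) = - (1/2) * (\<Sum>e\<in>UNIV. J a e * (\<Sum>b\<in>UNIV. \<Sum>c\<in>UNIV. gi b c * T c e b))"
      unfolding Gt_def sum_distrib_left
      by (subst (2) sum.swap, subst sum.swap) (simp add: mult_ac sum_distrib_left)
    also have "\<dots> = (1/2) * (\<Sum>e\<in>UNIV. J a e * (\<Sum>f\<in>UNIV. gi e f * th T f))"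
      by (simp add: Sform[OF assms(2)] sum_negf)
    finally show ?thesis .
  qed
  show ?thesis
  proof
    assume "ttf (Gt T)"
    then have "\<And>b. (\<Sum>e\<in>UNIV. th T e * J e b) = 0" using t2 unfolding ttf_def by simp
    then show "\<forall>b. th T b = 0" using thJ0 by blast
  next
    assume "\<forall>b. th T b = 0"
    then show "ttf (Gt T)" unfolding ttf_def using t1 t2 t3 by simp
  qed
qed


lemma JGt_eq: "JGt T d b c = (1/2) * T c d b"
proof -
  have "JGt T d b c = - (1/2) * (\<Sum>e\<in>UNIV. J d e * (\<Sum>f\<in>UNIV. J e f * T c f b))"
    unfolding JGt_def Gt_def sum_distrib_left by (simp add: mult_ac)
  also have "\<dots> = (1/2) * T c d b" using JJT[of d "\<lambda>f. T c f b"] by simp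
  finally show ?thesis .
qed

lemma trJG:
  assumes "P1 T" "P2 T" shows "ttf (JGt T) \<longleftrightarrow> (\<forall>b. th T b = 0)"
proof -
  have t1: "(\<Sum>a\<in>UNIV. JGt T a a b) = 0" for b
    using trT[OF assms(2), of b] unfolding JGt_eq by (simp add: sum_divide_distrib[symmetric])
  have t2: "(\<Sum>a\<in>UNIV. JGt T a b a) = (1/2) * th T b" for b
    unfolding JGt_eq th_def by (simp add: sum_divide_distrib[symmetric])
  have t3: "(\<Sum>b\<in>UNIV. \<Sum>c\<in>UNIV. gi b c * JGt T a b c) = (1/2) * - (\<Sum>f\<in>UNIV. gi a f * th T f)" for a
    unfolding JGt_eq using Sform[OF assms(2), of a]
    by (simp add: sum_divide_distrib[symmetric] sum_distrib_left[symmetric] mult_ac)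
  show ?thesis
  proof
    assume "ttf (JGt T)"
    then show "\<forall>b. th T b = 0" using t2 unfolding ttf_def by simp
  next
    assume "\<forall>b. th T b = 0"
    then show "ttf (JGt T)" unfolding ttf_def using t1 t2 t3 by simp
  qed
qed

lemma JgiJ: "(\<Sum>b\<in>UNIV. \<Sum>c\<in>UNIV. J f b * gi b c * J e c) = gi f e"
proof -
  have "(\<Sum>b\<in>UNIV. \<Sum>c\<in>UNIV. J f b * gi b c * J e c) = (\<Sum>c\<in>UNIV. (\<Sum>b\<in>UNIV. J f b * gi b c) * J e c)"
    unfolding sum_distrib_right by (rule sum.swap)
  also have "\<dots> = (\<Sum>c\<in>UNIV. (- (\<Sum>b\<in>UNIV. J c b * gi b f)) * J e c)"
    by (simp only: Jgi_anti[of f])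
  also have "\<dots> = - (\<Sum>b\<in>UNIV. (\<Sum>c\<in>UNIV. J e c * J c b) * gi b f)"
    unfolding sum_distrib_right sum_negf by (subst sum.swap) (simp add: mult_ac sum_negf sum_distrib_left)
  also have "\<dots> = gi e f" by (simp only: JJ) simp
  finally show ?thesis by (simp add: gisym)
qed

lemma GJ_aux: assumes "P1 T" shows "(\<Sum>b\<in>UNIV. Gt T a b e * J b c) = - (1/2) * T e a c"
proof -
  have "(\<Sum>b\<in>UNIV. Gt T a b e * J b c) = (\<Sum>b\<in>UNIV. - (1/2) * ((\<Sum>h\<in>UNIV. J a h * T e h b) * J b c))"
    unfolding Gt_def by (simp only: mult.assoc)
  also have "\<dots> = - (1/2) * (\<Sum>b\<in>UNIV. (\<Sum>h\<in>UNIV. J a h * T e h b) * J b c)"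
    by (rule sum_distrib_left[symmetric])
  also have "\<dots> = - (1/2) * T e a c" by (simp only: JTJ[OF assms])
  finally show ?thesis .
qed

lemma trGJ2:
  assumes "P1 T" "P2 T" shows "ttf (GJ2t T) \<longleftrightarrow> (\<forall>b. th T b = 0)"
proof -
  have G1: "(\<Sum>a\<in>UNIV. Gt T a a b) = 0" for b
    using trJT[OF assms(1), of b] unfolding Gt_def by (simp add: sum_negf sum_divide_distrib[symmetric])
  have t1: "(\<Sum>a\<in>UNIV. GJ2t T a a b) = 0" for b
  proof -
    have "(\<Sum>a\<in>UNIV. GJ2t T a a b) = (\<Sum>e\<in>UNIV. (\<Sum>a\<in>UNIV. Gt T a a e) * J e b)"
      unfolding GJ2t_def sum_distrib_right by (rule sum.swap)
    then show ?thesis using G1 by simp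
  qed
  have t2: "(\<Sum>a\<in>UNIV. GJ2t T a b a) = (1/2) * th T b" for b
  proof -
    have "(\<Sum>a\<in>UNIV. GJ2t T a b a) = (\<Sum>e\<in>UNIV. JGt T e b e)"
      unfolding GJ2t_def JGt_def by (subst sum.swap) (simp add: mult_ac)
    then show ?thesis unfolding JGt_eq th_def by (simp add: sum_distrib_left)
  qed
  have t3: "(\<Sum>b\<in>UNIV. \<Sum>c\<in>UNIV. gi b c * GJ2t T a b c) = (1/2) * - (\<Sum>f\<in>UNIV. gi a f * th T f)" for a
  proof -
    have "(\<Sum>b\<in>UNIV. \<Sum>c\<in>UNIV. gi b c * GJ2t T a b c) = (\<Sum>b\<in>UNIV. \<Sum>e\<in>UNIV. Gt T a b e * (\<Sum>c\<in>UNIV. J e c * gi c b))"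
      unfolding GJ2t_def sum_distrib_left
      by (rule sum.cong[OF refl], subst sum.swap) (simp add: mult_ac gisym)
    also have "\<dots> = - (\<Sum>b\<in>UNIV. \<Sum>e\<in>UNIV. Gt T a b e * (\<Sum>c\<in>UNIV. J b c * gi c e))"
      by (rule trans[OF sum.cong[OF refl, OF sum.cong[OF refl]]], subst Jgi_anti, rule refl)
         (simp add: sum_negf)
    also have "\<dots> = - (\<Sum>c\<in>UNIV. \<Sum>e\<in>UNIV. (\<Sum>b\<in>UNIV. Gt T a b e * J b c) * gi c e)"
      unfolding sum_distrib_left sum_distrib_right
      by (subst swap3) (simp add: mult_ac)
    also have "\<dots> = (1/2) * (\<Sum>c\<in>UNIV. \<Sum>e\<in>UNIV. gi c e * T e a c)"
      by (simp only: GJ_aux[OF assms(1)]) (simp add: sum_distrib_left sum_negf mult_ac)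
    also have "\<dots> = (1/2) * - (\<Sum>f\<in>UNIV. gi a f * th T f)"
      using Sform[OF assms(2), of a] by simp
    finally show ?thesis .
  qed
  show ?thesis
  proof
    assume "ttf (GJ2t T)"
    then show "\<forall>b. th T b = 0" using t2 unfolding ttf_def by simp
  next
    assume "\<forall>b. th T b = 0"
    then show "ttf (GJ2t T)" unfolding ttf_def using t1 t2 t3 by simp
  qed
qed


lemma Gt3: assumes "P2 T"
  shows "(\<Sum>b\<in>UNIV. \<Sum>c\<in>UNIV. gi b c * Gt T a b c) = (1/2) * (\<Sum>e\<in>UNIV. J a e * (\<Sum>f\<in>UNIV. gi e f * th T f))"
proof -
  have "(\<Sum>b\<in>UNIV. \<Sum>c\<in>UNIV. gi b c * Gt T a b c) = - (1/2) * (\<Sum>e\<in>UNIV. J a e * (\<Sum>b\<in>UNIV. \<Sum>c\<in>UNIV. gi b c * T c e b))"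
    unfolding Gt_def sum_distrib_left
    by (subst (2) sum.swap, subst sum.swap) (simp add: mult_ac sum_distrib_left)
  also have "\<dots> = (1/2) * (\<Sum>e\<in>UNIV. J a e * (\<Sum>f\<in>UNIV. gi e f * th T f))"
    by (simp add: Sform[OF assms] sum_negf)
  finally show ?thesis .
qed

lemma GJJt_eq: assumes "P1 T" shows "GJJt T d b c = - (1/2) * (\<Sum>f\<in>UNIV. T f d b * J f c)"
proof -
  have "GJJt T d b c = (\<Sum>f\<in>UNIV. (\<Sum>e\<in>UNIV. Gt T d e f * J e b) * J f c)"
    unfolding GJJt_def sum_distrib_right by (rule sum.swap)
  also have "\<dots> = (\<Sum>f\<in>UNIV. (- (1/2) * T f d b) * J f c)"
    by (simp only: GJ_aux[OF assms])
  finally show ?thesis by (simp add: sum_distrib_left mult_ac)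
qed

lemma trGJJ:
  assumes "P1 T" "P2 T" shows "ttf (GJJt T) \<longleftrightarrow> (\<forall>b. th T b = 0)"
proof -
  have t1: "(\<Sum>a\<in>UNIV. GJJt T a a b) = 0" for b
  proof -
    have "(\<Sum>a\<in>UNIV. GJJt T a a b) = - (1/2) * (\<Sum>f\<in>UNIV. (\<Sum>a\<in>UNIV. T f a a) * J f b)"
      unfolding GJJt_eq[OF assms(1)] sum_distrib_left[symmetric] sum_distrib_right
      by (subst sum.swap) (rule refl)
    then show ?thesis using trT[OF assms(2)] by simp
  qed
  have t2: "(\<Sum>a\<in>UNIV. GJJt T a b a) = (1/2) * (\<Sum>e\<in>UNIV. th T e * J e b)" for b
  proof -
    have "(\<Sum>a\<in>UNIV. GJJt T a b a) = - (1/2) * (\<Sum>f\<in>UNIV. \<Sum>a\<in>UNIV. J f a * T f a b)"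
      unfolding GJJt_eq[OF assms(1)] sum_distrib_left[symmetric]
      by (subst sum.swap) (simp add: mult_ac)
    then show ?thesis using tr2[OF assms(1), of b] unfolding th_def by simp
  qed
  have t3: "(\<Sum>b\<in>UNIV. \<Sum>c\<in>UNIV. gi b c * GJJt T a b c) = (1/2) * (\<Sum>e\<in>UNIV. J a e * (\<Sum>f\<in>UNIV. gi e f * th T f))" for a
  proof -
    have "(\<Sum>b\<in>UNIV. \<Sum>c\<in>UNIV. gi b c * GJJt T a b c) = (\<Sum>e\<in>UNIV. \<Sum>f\<in>UNIV. Gt T a e f * (\<Sum>b\<in>UNIV. \<Sum>c\<in>UNIV. J e b * gi b c * J f c))"
      unfolding GJJt_def sum_distrib_left
      by (rule trans[OF swap4]) (simp add: mult_ac)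
    also have "\<dots> = (\<Sum>e\<in>UNIV. \<Sum>f\<in>UNIV. gi e f * Gt T a e f)"
      by (simp only: JgiJ) (simp add: mult.commute)
    also have "\<dots> = (1/2) * (\<Sum>e\<in>UNIV. J a e * (\<Sum>f\<in>UNIV. gi e f * th T f))"
      by (rule Gt3[OF assms(2)])
    finally show ?thesis .
  qed
  show ?thesis
  proof
    assume "ttf (GJJt T)"
    then have "\<And>b. (\<Sum>e\<in>UNIV. th T e * J e b) = 0" using t2 unfolding ttf_def by simp
    then show "\<forall>b. th T b = 0" using thJ0 by blast
  next
    assume "\<forall>b. th T b = 0"
    then show "ttf (GJJt T)" unfolding ttf_def using t1 t2 t3 by simp
  qed
qed


lemma contract5: "(\<Sum>a\<in>UNIV. (\<Sum>e\<in>UNIV. gi a e * X e) * g a d) = X d"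
proof -
  have "(\<Sum>a\<in>UNIV. (\<Sum>e\<in>UNIV. gi a e * X e) * g a d) = (\<Sum>e\<in>UNIV. (\<Sum>a\<in>UNIV. g d a * gi a e) * X e)"
    unfolding sum_distrib_right by (subst sum.swap) (simp add: mult_ac gsym)
  also have "\<dots> = X d" by (simp only: ggi) simp
  finally show ?thesis .
qed

lemma thdiff:
  fixes B :: "'n \<Rightarrow> real"
  assumes T1: "\<And>k b c. T1 k b c = T0 k b c + (\<Sum>d\<in>UNIV. C b k d * J d c) - (\<Sum>d\<in>UNIV. C d k c * J b d)"
    and C: "\<And>e b c. C e b c = - B b * (if e = c then 1 else 0) - B c * (if e = b then 1 else 0)
              + (\<Sum>d\<in>UNIV. gi e d * B d) * g b c"
  shows "th T1 c = th T0 c - (real CARD('n) - 2) * (\<Sum>d\<in>UNIV. B d * J d c)"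
proof -
  let ?Bs = "\<lambda>e. \<Sum>d\<in>UNIV. gi e d * B d"
  have hA: "(\<Sum>a\<in>UNIV. C a a d) = - real CARD('n) * B d" for d
    unfolding C by (simp add: sum.distrib sum_subtractf contract5 sum_negf)
  have hB: "(\<Sum>a\<in>UNIV. \<Sum>d\<in>UNIV. C d a c * J a d) = - 2 * (\<Sum>a\<in>UNIV. B a * J a c)"
  proof -
    have "(\<Sum>a\<in>UNIV. \<Sum>d\<in>UNIV. C d a c * J a d) =
        - (\<Sum>a\<in>UNIV. \<Sum>d\<in>UNIV. B a * (if d = c then 1 else 0) * J a d)
        - (\<Sum>a\<in>UNIV. \<Sum>d\<in>UNIV. B c * (if d = a then 1 else 0) * J a d)
        + (\<Sum>a\<in>UNIV. \<Sum>d\<in>UNIV. ?Bs d * g a c * J a d)"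
      by (simp only: C sum.distrib sum_subtractf sum_negf mult_minus_left ring_distribs)
    also have "(\<Sum>a\<in>UNIV. \<Sum>d\<in>UNIV. B a * (if d = c then 1 else 0) * J a d) = (\<Sum>a\<in>UNIV. B a * J a c)"
      by (simp add: if_distrib[of "\<lambda>t. _ * t * _"] cong: if_cong)
    also have "(\<Sum>a\<in>UNIV. \<Sum>d\<in>UNIV. B c * (if d = a then 1 else 0) * J a d) = B c * (\<Sum>a\<in>UNIV. J a a)"
      by (simp add: if_distrib[of "\<lambda>t. _ * t * _"] sum_distrib_left cong: if_cong)
    also have "(\<Sum>a\<in>UNIV. \<Sum>d\<in>UNIV. ?Bs d * g a c * J a d) = - (\<Sum>a\<in>UNIV. B a * J a c)"
    proof -
      have "(\<Sum>a\<in>UNIV. \<Sum>d\<in>UNIV. ?Bs d * g a c * J a d) = (\<Sum>d\<in>UNIV. ?Bs d * (\<Sum>a\<in>UNIV. g c a * J a d))"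
        unfolding sum_distrib_left by (subst sum.swap) (simp add: mult_ac gsym)
      also have "\<dots> = (\<Sum>d\<in>UNIV. ?Bs d * - (\<Sum>a\<in>UNIV. g d a * J a c))"
        by (rule sum.cong[OF refl], subst om, rule refl)
      also have "\<dots> = - (\<Sum>a\<in>UNIV. (\<Sum>d\<in>UNIV. ?Bs d * g d a) * J a c)"
        unfolding sum_distrib_left sum_distrib_right sum_negf mult_minus_right
        by (subst sum.swap) (simp add: mult_ac)
      also have "\<dots> = - (\<Sum>a\<in>UNIV. B a * J a c)"
        by (simp only: contract5)
      finally show ?thesis .
    qed
    finally show ?thesis by (simp add: trJ)
  qed
  have "th T1 c = th T0 c + (\<Sum>a\<in>UNIV. \<Sum>d\<in>UNIV. C a a d * J d c) - (\<Sum>a\<in>UNIV. \<Sum>d\<in>UNIV. C d a c * J a d)"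
    unfolding th_def by (simp only: T1 sum.distrib sum_subtractf)
  also have "(\<Sum>a\<in>UNIV. \<Sum>d\<in>UNIV. C a a d * J d c) = (\<Sum>d\<in>UNIV. (\<Sum>a\<in>UNIV. C a a d) * J d c)"
    unfolding sum_distrib_right by (rule sum.swap)
  also have "\<dots> = - real CARD('n) * (\<Sum>d\<in>UNIV. B d * J d c)"
    by (simp only: hA) (simp add: sum_distrib_left mult_ac)
  finally show ?thesis using hB by (simp add: algebra_simps)
qed


lemma canonB_alg:
  fixes B :: "'n \<Rightarrow> real"
  assumes "P1 T0" "\<And>c. th T1 c = 0"
    and "\<And>c. th T1 c = th T0 c - (real CARD('n) - 2) * (\<Sum>d\<in>UNIV. B d * J d c)"
    and "real CARD('n) - 2 \<noteq> 0"
  shows "(1 / (real CARD('n) - 2)) * (\<Sum>c\<in>UNIV. \<Sum>b\<in>UNIV. J c b * T0 c b a) = B a"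
proof -
  have th0: "th T0 c = (real CARD('n) - 2) * (\<Sum>d\<in>UNIV. B d * J d c)" for c
    using assms(2)[of c] assms(3)[of c] by simp
  have "(\<Sum>c\<in>UNIV. \<Sum>b\<in>UNIV. J c b * T0 c b a) = - (\<Sum>e\<in>UNIV. th T0 e * J e a)"
    using tr2[OF assms(1), of a] unfolding th_def .
  also have "\<dots> = - ((real CARD('n) - 2) * (\<Sum>e\<in>UNIV. (\<Sum>d\<in>UNIV. B d * J d e) * J e a))"
    by (simp only: th0 mult.assoc sum_distrib_left[symmetric])
  also have "(\<Sum>e\<in>UNIV. (\<Sum>d\<in>UNIV. B d * J d e) * J e a) = (\<Sum>d\<in>UNIV. B d * (\<Sum>e\<in>UNIV. J d e * J e a))"
    unfolding sum_distrib_left sum_distrib_right by (subst sum.swap) (simp add: mult_ac)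
  also have "\<dots> = - B a" by (simp only: JJ) simp
  finally show ?thesis using assms(4) by simp
qed

lemma P1_cov:
  assumes "\<And>k b c. (\<Sum>e\<in>UNIV. J b e * D e c k + D b e k * J e c) = 0"
  shows "P1 (\<lambda>k b c. D b c k + (\<Sum>d\<in>UNIV. \<Gamma> b k d * J d c) - (\<Sum>d\<in>UNIV. \<Gamma> d k c * J b d))"
  unfolding P1_def
proof (intro allI)
  fix k b c
  have a: "(\<Sum>e\<in>UNIV. (\<Sum>d\<in>UNIV. \<Gamma> b k d * J d e) * J e c) = - \<Gamma> b k c"
  proof -
    have "(\<Sum>e\<in>UNIV. (\<Sum>d\<in>UNIV. \<Gamma> b k d * J d e) * J e c) = (\<Sum>d\<in>UNIV. \<Gamma> b k d * (\<Sum>e\<in>UNIV. J d e * J e c))"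
      unfolding sum_distrib_left sum_distrib_right by (subst sum.swap) (simp add: mult_ac)
    also have "\<dots> = - \<Gamma> b k c" by (simp only: JJ) simp
    finally show ?thesis .
  qed
  have b: "(\<Sum>e\<in>UNIV. J b e * (\<Sum>d\<in>UNIV. \<Gamma> d k c * J e d)) = - \<Gamma> b k c"
  proof -
    have "(\<Sum>e\<in>UNIV. J b e * (\<Sum>d\<in>UNIV. \<Gamma> d k c * J e d)) = (\<Sum>d\<in>UNIV. (\<Sum>e\<in>UNIV. J b e * J e d) * \<Gamma> d k c)"
      unfolding sum_distrib_left sum_distrib_right by (subst sum.swap) (simp add: mult_ac)
    also have "\<dots> = - \<Gamma> b k c" by (simp only: JJ) simp
    finally show ?thesis .
  qed
  have c: "(\<Sum>e\<in>UNIV. (\<Sum>d\<in>UNIV. \<Gamma> d k e * J b d) * J e c) = (\<Sum>e\<in>UNIV. J b e * (\<Sum>d\<in>UNIV. \<Gamma> e k d * J d c))"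
    unfolding sum_distrib_left sum_distrib_right by (subst sum.swap) (simp add: mult_ac)
  have "(\<Sum>e\<in>UNIV. (D b e k + (\<Sum>d\<in>UNIV. \<Gamma> b k d * J d e) - (\<Sum>d\<in>UNIV. \<Gamma> d k e * J b d)) * J e c) +
        (\<Sum>e\<in>UNIV. J b e * (D e c k + (\<Sum>d\<in>UNIV. \<Gamma> e k d * J d c) - (\<Sum>d\<in>UNIV. \<Gamma> d k c * J e d)))
      = (\<Sum>e\<in>UNIV. J b e * D e c k + D b e k * J e c)
        + (\<Sum>e\<in>UNIV. (\<Sum>d\<in>UNIV. \<Gamma> b k d * J d e) * J e c)
        - (\<Sum>e\<in>UNIV. (\<Sum>d\<in>UNIV. \<Gamma> d k e * J b d) * J e c)
        + (\<Sum>e\<in>UNIV. J b e * (\<Sum>d\<in>UNIV. \<Gamma> e k d * J d c))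
        - (\<Sum>e\<in>UNIV. J b e * (\<Sum>d\<in>UNIV. \<Gamma> d k c * J e d))"
    by (simp add: algebra_simps sum.distrib sum_subtractf)
  also have "\<dots> = 0" using assms[of b c k] a b c by simp
  finally show "(\<Sum>e\<in>UNIV. (D b e k + (\<Sum>d\<in>UNIV. \<Gamma> b k d * J d e) - (\<Sum>d\<in>UNIV. \<Gamma> d k e * J b d)) * J e c) +
        (\<Sum>e\<in>UNIV. J b e * (D e c k + (\<Sum>d\<in>UNIV. \<Gamma> e k d * J d c) - (\<Sum>d\<in>UNIV. \<Gamma> d k c * J e d))) = 0" .
qed


lemma P2_cov:
  assumes weyl: "\<And>k b c. Dg b c k - (\<Sum>d\<in>UNIV. \<Gamma> d k b * g d c) - (\<Sum>d\<in>UNIV. \<Gamma> d k c * g b d) = 2 * Bk k * g b c"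
    and dom: "\<And>k b c. (\<Sum>d\<in>UNIV. Dg b d k * J d c + g b d * D d c k) + (\<Sum>d\<in>UNIV. Dg c d k * J d b + g c d * D d b k) = 0"
  shows "P2 (\<lambda>k b c. D b c k + (\<Sum>d\<in>UNIV. \<Gamma> b k d * J d c) - (\<Sum>d\<in>UNIV. \<Gamma> d k c * J b d))"
    (is "P2 ?T")
proof -
  let ?w = "\<lambda>b c. \<Sum>d\<in>UNIV. g b d * J d c"
  have E: "(\<Sum>d\<in>UNIV. Dg b d k * J d c + g b d * D d c k) =
      2 * Bk k * ?w b c + (\<Sum>e\<in>UNIV. \<Gamma> e k b * ?w e c) + (\<Sum>d\<in>UNIV. g b d * ?T k d c) + (\<Sum>e\<in>UNIV. \<Gamma> e k c * ?w b e)"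
    for k b c
  proof -
    have Dg: "\<And>d. Dg b d k = 2 * Bk k * g b d + (\<Sum>e\<in>UNIV. \<Gamma> e k b * g e d) + (\<Sum>e\<in>UNIV. \<Gamma> e k d * g b e)"
      using weyl by (simp add: algebra_simps gsym)
    have 1: "(\<Sum>d\<in>UNIV. Dg b d k * J d c) = 2 * Bk k * ?w b c + (\<Sum>e\<in>UNIV. \<Gamma> e k b * ?w e c)
        + (\<Sum>d\<in>UNIV. \<Sum>e\<in>UNIV. \<Gamma> e k d * g b e * J d c)"
    proof -
      have "(\<Sum>d\<in>UNIV. Dg b d k * J d c) = 2 * Bk k * ?w b c + (\<Sum>d\<in>UNIV. (\<Sum>e\<in>UNIV. \<Gamma> e k b * g e d) * J d c)
        + (\<Sum>d\<in>UNIV. \<Sum>e\<in>UNIV. \<Gamma> e k d * g b e * J d c)"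
        by (simp add: Dg algebra_simps sum.distrib sum_distrib_left sum_distrib_right)
      also have "(\<Sum>d\<in>UNIV. (\<Sum>e\<in>UNIV. \<Gamma> e k b * g e d) * J d c) = (\<Sum>e\<in>UNIV. \<Gamma> e k b * ?w e c)"
        unfolding sum_distrib_left sum_distrib_right by (subst sum.swap) (simp add: mult_ac)
      finally show ?thesis .
    qed
    have 2: "(\<Sum>d\<in>UNIV. g b d * ?T k d c) = (\<Sum>d\<in>UNIV. g b d * D d c k)
        + (\<Sum>d\<in>UNIV. \<Sum>e\<in>UNIV. \<Gamma> e k d * g b e * J d c) - (\<Sum>e\<in>UNIV. \<Gamma> e k c * ?w b e)"
    proof -
      have "(\<Sum>d\<in>UNIV. g b d * ?T k d c) = (\<Sum>d\<in>UNIV. g b d * D d c k)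
        + (\<Sum>d\<in>UNIV. \<Sum>e\<in>UNIV. g b d * (\<Gamma> d k e * J e c)) - (\<Sum>d\<in>UNIV. \<Sum>e\<in>UNIV. g b d * (\<Gamma> e k c * J d e))"
        by (simp add: algebra_simps sum.distrib sum_subtractf sum_distrib_left)
      also have "(\<Sum>d\<in>UNIV. \<Sum>e\<in>UNIV. g b d * (\<Gamma> d k e * J e c)) = (\<Sum>d\<in>UNIV. \<Sum>e\<in>UNIV. \<Gamma> e k d * g b e * J d c)"
        by (subst sum.swap) (simp add: mult_ac)
      also have "(\<Sum>d\<in>UNIV. \<Sum>e\<in>UNIV. g b d * (\<Gamma> e k c * J d e)) = (\<Sum>e\<in>UNIV. \<Gamma> e k c * ?w b e)"
        unfolding sum_distrib_left by (subst sum.swap) (simp add: mult_ac)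
      finally show ?thesis .
    qed
    show ?thesis using 1 2 by (simp add: sum.distrib)
  qed
  show ?thesis unfolding P2_def
  proof (intro allI)
    fix k b c
    have "0 = 2 * Bk k * (?w b c + ?w c b) + ((\<Sum>e\<in>UNIV. \<Gamma> e k b * ?w e c) + (\<Sum>e\<in>UNIV. \<Gamma> e k b * ?w c e))
        + ((\<Sum>e\<in>UNIV. \<Gamma> e k c * ?w b e) + (\<Sum>e\<in>UNIV. \<Gamma> e k c * ?w e b))
        + ((\<Sum>d\<in>UNIV. g b d * ?T k d c) + (\<Sum>d\<in>UNIV. g c d * ?T k d b))"
      using dom[of b k c] E[of b k c] E[of c k b] by (simp add: algebra_simps)
    moreover have "?w b c + ?w c b = 0" using om[of b c] by simp
    moreover have "(\<Sum>e\<in>UNIV. \<Gamma> e k b * ?w e c) + (\<Sum>e\<in>UNIV. \<Gamma> e k b * ?w c e) = 0"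
      by (simp only: sum.distrib[symmetric] distrib_left[symmetric] om[of _ c]) simp
    moreover have "(\<Sum>e\<in>UNIV. \<Gamma> e k c * ?w b e) + (\<Sum>e\<in>UNIV. \<Gamma> e k c * ?w e b) = 0"
      by (simp only: sum.distrib[symmetric] distrib_left[symmetric] om[of _ b]) simp
    ultimately show "(\<Sum>d\<in>UNIV. g b d * ?T k d c) + (\<Sum>d\<in>UNIV. g c d * ?T k d b) = 0" by simp
  qed
qed


lemma koszul:
  fixes B :: "'n \<Rightarrow> real"
  assumes sym: "\<And>e a b. \<Gamma> e a b = \<Gamma> e b a"
    and dgs: "\<And>b c a. Dg b c a = Dg c b a"
    and weyl: "\<And>a b c. Dg b c a - (\<Sum>d\<in>UNIV. \<Gamma> d a b * g d c) - (\<Sum>d\<in>UNIV. \<Gamma> d a c * g b d) = 2 * B a * g b c"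
  shows "\<Gamma> e b c = (1/2) * (\<Sum>d\<in>UNIV. gi e d * (Dg d c b + Dg d b c - Dg b c d))
     - B b * (if e = c then 1 else 0) + (\<Sum>d\<in>UNIV. gi e d * B d) * g b c - B c * (if e = b then 1 else 0)"
proof -
  define L where "L c a b = (\<Sum>d\<in>UNIV. \<Gamma> d a b * g d c)" for c a b
  have Lsym: "L x a b = L x b a" for x a b unfolding L_def using sym by simp
  have DgL: "Dg b c a = L c a b + L b a c + 2 * B a * g b c" for a b c
  proof -
    have "(\<Sum>d\<in>UNIV. \<Gamma> d a c * g b d) = L b a c" unfolding L_def by (simp add: gsym)
    then show ?thesis using weyl[of b c a] unfolding L_def by (simp add: algebra_simps)
  qed
  have K: "Dg d c b + Dg d b c - Dg b c d = 2 * L d b c + 2 * B b * g d c + 2 * B c * g d b - 2 * B d * g b c" for d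
    using DgL[of d c b] DgL[of d b c] DgL[of b c d] Lsym[of c b d] Lsym[of b c d] Lsym[of d c b]
    by (simp add: algebra_simps)
  have "(1/2) * (\<Sum>d\<in>UNIV. gi e d * (Dg d c b + Dg d b c - Dg b c d))
      = (\<Sum>d\<in>UNIV. gi e d * L d b c) + B b * (\<Sum>d\<in>UNIV. gi e d * g d c) + B c * (\<Sum>d\<in>UNIV. gi e d * g d b)
        - (\<Sum>d\<in>UNIV. gi e d * B d) * g b c"
    unfolding K by (simp add: algebra_simps sum.distrib sum_subtractf sum_distrib_left sum_distrib_right)
  also have "(\<Sum>d\<in>UNIV. gi e d * L d b c) = \<Gamma> e b c"
    unfolding L_def using contract3[of e "\<lambda>f. \<Gamma> f b c"] by (simp add: mult_ac)
  finally have h: "(1/2) * (\<Sum>d\<in>UNIV. gi e d * (Dg d c b + Dg d b c - Dg b c d)) =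
      \<Gamma> e b c + B b * (\<Sum>d\<in>UNIV. gi e d * g d c) + B c * (\<Sum>d\<in>UNIV. gi e d * g d b)
        - (\<Sum>d\<in>UNIV. gi e d * B d) * g b c" .
  show ?thesis using h unfolding gig by linarith
qed

end


lemma pd_sum_prod:
  fixes f h :: "'i \<Rightarrow> real^'n \<Rightarrow> real"
  assumes "finite I" "\<And>e. e \<in> I \<Longrightarrow> f e differentiable at x" "\<And>e. e \<in> I \<Longrightarrow> h e differentiable at x"
  shows "pd (\<lambda>y. \<Sum>e\<in>I. f e y * h e y) x k = (\<Sum>e\<in>I. f e x * pd (h e) x k + pd (f e) x k * h e x)"
proof -
  have "((\<lambda>y. \<Sum>e\<in>I. f e y * h e y) has_derivative
     (\<lambda>v. \<Sum>e\<in>I. f e x * frechet_derivative (h e) (at x) v + frechet_derivative (f e) (at x) v * h e x)) (at x)"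
    by (intro has_derivative_sum has_derivative_mult frechet_derivative_works[THEN iffD1] assms)
  from frechet_derivative_at[OF this, symmetric] show ?thesis unfolding pd_def by simp
qed

lemma pd_add:
  fixes f h :: "real^'n \<Rightarrow> real"
  assumes "f differentiable at x" "h differentiable at x"
  shows "pd (\<lambda>y. f y + h y) x k = pd f x k + pd h x k"
proof -
  have "((\<lambda>y. f y + h y) has_derivative
     (\<lambda>v. frechet_derivative f (at x) v + frechet_derivative h (at x) v)) (at x)"
    by (intro has_derivative_add frechet_derivative_works[THEN iffD1] assms)
  from frechet_derivative_at[OF this, symmetric] show ?thesis unfolding pd_def by simp
qed

lemma pd_const:
  fixes f :: "real^'n \<Rightarrow> real"
  assumes "open U" "x \<in> U" "\<And>y. y \<in> U \<Longrightarrow> f y = c"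
  shows "pd f x k = 0"
proof -
  have "frechet_derivative (\<lambda>y. c) (at x) = frechet_derivative f (at x)"
    by (rule frechet_derivative_transform_within_open[OF differentiable_const assms(1,2)]) (use assms(3) in auto)
  moreover have "frechet_derivative (\<lambda>y. c) (at x) = (\<lambda>v. 0)"
    using frechet_derivative_at[OF has_derivative_const[of c "at x"]] by simp
  ultimately show ?thesis unfolding pd_def by (metis (no_types))
qed

lemma pd_cong:
  fixes f h :: "real^'n \<Rightarrow> real"
  assumes "f differentiable at x" "open U" "x \<in> U" "\<And>y. y \<in> U \<Longrightarrow> f y = h y"
  shows "pd f x k = pd h x k"
  unfolding pd_def using frechet_derivative_transform_within_open[OF assms] by simp

lemma om_from:
  fixes g J :: "'n::finite \<Rightarrow> 'n \<Rightarrow> real"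
  assumes gsym: "\<And>a b. g a b = g b a"
    and JJ: "\<And>a c. (\<Sum>b\<in>UNIV. J a b * J b c) = (if a = c then -1 else 0)"
    and orth: "\<And>c d. (\<Sum>a\<in>UNIV. \<Sum>b\<in>UNIV. g a b * J a c * J b d) = g c d"
  shows "(\<Sum>d\<in>UNIV. g b d * J d c) = - (\<Sum>d\<in>UNIV. g c d * J d b)"
proof -
  have "(\<Sum>d\<in>UNIV. g c d * J d b) = (\<Sum>d\<in>UNIV. (\<Sum>a\<in>UNIV. \<Sum>e\<in>UNIV. g a e * J a c * J e d) * J d b)"
    by (simp only: orth)
  also have "\<dots> = (\<Sum>a\<in>UNIV. \<Sum>e\<in>UNIV. g a e * J a c * (\<Sum>d\<in>UNIV. J e d * J d b))"
    unfolding sum_distrib_left sum_distrib_right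
    by (subst (2) sum.swap, subst sum.swap) (simp add: mult_ac)
  also have "\<dots> = - (\<Sum>a\<in>UNIV. g a b * J a c)" by (simp only: JJ) (simp add: sum_negf)
  finally show ?thesis by (simp add: gsym)
qed

lemma metric_invertible:
  fixes g :: "real^'n \<Rightarrow> 'n \<Rightarrow> 'n \<Rightarrow> real"
  assumes pos: "\<forall>v::real^'n. v \<noteq> 0 \<longrightarrow> (\<Sum>a\<in>UNIV. \<Sum>b\<in>UNIV. g x a b * v$a * v$b) > 0"
  shows "invertible (metric_mat g x)"
proof -
  have "\<forall>v. metric_mat g x *v v = 0 \<longrightarrow> v = 0"
  proof (intro allI impI)
    fix v assume h: "metric_mat g x *v v = 0"
    have "(\<Sum>a\<in>UNIV. \<Sum>b\<in>UNIV. g x a b * v$a * v$b) = (\<Sum>a\<in>UNIV. v$a * (metric_mat g x *v v)$a)"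
      by (simp add: matrix_vector_mult_def metric_mat_def sum_distrib_left mult_ac)
    also have "\<dots> = 0" using h by simp
    finally show "v = 0" using pos by force
  qed
  then show ?thesis
    using matrix_left_invertible_ker invertible_left_inverse by blast
qed

lemma ginv_props:
  fixes g :: "real^'n \<Rightarrow> 'n \<Rightarrow> 'n \<Rightarrow> real"
  assumes sym: "\<forall>a b. g x a b = g x b a"
    and pos: "\<forall>v::real^'n. v \<noteq> 0 \<longrightarrow> (\<Sum>a\<in>UNIV. \<Sum>b\<in>UNIV. g x a b * v$a * v$b) > 0"
  shows "(\<Sum>d\<in>UNIV. ginv g x a d * g x d c) = (if a = c then 1 else 0)"
    and "(\<Sum>d\<in>UNIV. g x a d * ginv g x d c) = (if a = c then 1 else 0)"
    and "ginv g x a c = ginv g x c a"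
proof -
  let ?M = "metric_mat g x"
  have inv: "invertible ?M" using metric_invertible[of g x, OF pos] .
  then have both: "?M ** matrix_inv ?M = mat 1 \<and> matrix_inv ?M ** ?M = mat 1"
    unfolding invertible_def matrix_inv_def by (rule someI_ex)
  have L: "\<And>a c. (\<Sum>d\<in>UNIV. ginv g x a d * g x d c) = (if a = c then 1 else 0)"
  proof -
    fix a c
    have "(matrix_inv ?M ** ?M) $ a $ c = (if a = c then 1 else 0)" using both by (simp add: mat_def)
    then show "(\<Sum>d\<in>UNIV. ginv g x a d * g x d c) = (if a = c then 1 else 0)"
      by (simp add: matrix_matrix_mult_def ginv_def metric_mat_def)
  qed
  have R: "\<And>a c. (\<Sum>d\<in>UNIV. g x a d * ginv g x d c) = (if a = c then 1 else 0)"
  proof -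
    fix a c
    have "(?M ** matrix_inv ?M) $ a $ c = (if a = c then 1 else 0)" using both by (simp add: mat_def)
    then show "(\<Sum>d\<in>UNIV. g x a d * ginv g x d c) = (if a = c then 1 else 0)"
      by (simp add: matrix_matrix_mult_def ginv_def metric_mat_def)
  qed
  show "(\<Sum>d\<in>UNIV. ginv g x a d * g x d c) = (if a = c then 1 else 0)" by (rule L)
  show "(\<Sum>d\<in>UNIV. g x a d * ginv g x d c) = (if a = c then 1 else 0)" by (rule R)
  have T: "\<And>a e. (\<Sum>d\<in>UNIV. ginv g x d a * g x d e) = (if e = a then 1 else 0)"
    using R sym by (simp add: mult.commute)
  have "ginv g x a c = (\<Sum>e\<in>UNIV. (if e = a then 1 else 0) * ginv g x e c)"
    by simp
  also have "\<dots> = (\<Sum>e\<in>UNIV. (\<Sum>d\<in>UNIV. ginv g x d a * g x d e) * ginv g x e c)"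
    by (simp only: T)
  also have "\<dots> = (\<Sum>d\<in>UNIV. ginv g x d a * (\<Sum>e\<in>UNIV. g x d e * ginv g x e c))"
    unfolding sum_distrib_left sum_distrib_right by (subst sum.swap) (simp add: mult_ac)
  also have "\<dots> = ginv g x c a" by (simp only: R) simp
  finally show "ginv g x a c = ginv g x c a" .
qed

lemma pointwise:
  fixes U :: "(real^'n) set"
    and g J :: "real^'n \<Rightarrow> 'n \<Rightarrow> 'n \<Rightarrow> real"
    and Gam :: "real^'n \<Rightarrow> 'n \<Rightarrow> 'n \<Rightarrow> 'n \<Rightarrow> real"
    and B :: "real^'n \<Rightarrow> 'n \<Rightarrow> real"
  assumes card: "CARD('n) \<ge> 4"
    and cah: "conformal_almost_hermitian U g J"
    and Gsym: "\<forall>x\<in>U. \<forall>a b c. Gam x a b c = Gam x a c b"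
    and wB: "\<forall>x\<in>U. \<forall>a b c. cov_g Gam g x a b c = 2 * B x a * g x b c"
    and x: "x \<in> U"
  shows "totally_trace_free g x (G_tensor Gam J x) \<longleftrightarrow> (\<forall>b. (\<Sum>a\<in>UNIV. cov_J Gam J x a a b) = 0)"
    and "totally_trace_free g x (JG_tensor Gam J x) \<longleftrightarrow> (\<forall>b. (\<Sum>a\<in>UNIV. cov_J Gam J x a a b) = 0)"
    and "totally_trace_free g x (GJ2_tensor Gam J x) \<longleftrightarrow> (\<forall>b. (\<Sum>a\<in>UNIV. cov_J Gam J x a a b) = 0)"
    and "totally_trace_free g x (GJJ_tensor Gam J x) \<longleftrightarrow> (\<forall>b. (\<Sum>a\<in>UNIV. cov_J Gam J x a a b) = 0)"
    and "(\<forall>b. (\<Sum>a\<in>UNIV. cov_J Gam J x a a b) = 0) \<Longrightarrow> Gam x a b c = canon_christoffel g J x a b c"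
proof -
  have openU: "open U" using cah unfolding conformal_almost_hermitian_def by blast
  have H: "\<And>y. y \<in> U \<Longrightarrow> (\<forall>a b. g y a b = g y b a) \<and>
        (\<forall>v::real^'n. v \<noteq> 0 \<longrightarrow> (\<Sum>a\<in>UNIV. \<Sum>b\<in>UNIV. g y a b * v$a * v$b) > 0) \<and>
        (\<forall>a c. (\<Sum>b\<in>UNIV. J y a b * J y b c) = (if a = c then -1 else 0)) \<and>
        (\<forall>c d. (\<Sum>a\<in>UNIV. \<Sum>b\<in>UNIV. g y a b * J y a c * J y b d) = g y c d) \<and>
        (\<forall>a b. (\<lambda>y. g y a b) differentiable (at y)) \<and>
        (\<forall>a b. (\<lambda>y. J y a b) differentiable (at y))"
    using cah unfolding conformal_almost_hermitian_def by blast
  have om: "\<And>y b c. y \<in> U \<Longrightarrow> (\<Sum>d\<in>UNIV. g y b d * J y d c) = - (\<Sum>d\<in>UNIV. g y c d * J y d b)"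
  proof -
    fix y b c assume y: "y \<in> U"
    show "(\<Sum>d\<in>UNIV. g y b d * J y d c) = - (\<Sum>d\<in>UNIV. g y c d * J y d b)"
      by (rule om_from) (use H[OF y] in auto)
  qed
  have gs: "\<And>a b. g x a b = g x b a" and pos: "\<forall>v::real^'n. v \<noteq> 0 \<longrightarrow> (\<Sum>a\<in>UNIV. \<Sum>b\<in>UNIV. g x a b * v$a * v$b) > 0"
    and JJx: "\<And>a c. (\<Sum>b\<in>UNIV. J x a b * J x b c) = (if a = c then -1 else 0)"
    and dg: "\<And>a b. (\<lambda>y. g y a b) differentiable (at x)"
    and dJ: "\<And>a b. (\<lambda>y. J y a b) differentiable (at x)"
    using H[OF x] by auto
  interpret P: palg "g x" "ginv g x" "J x"
  proof
    show "\<And>a b. g x a b = g x b a" by (rule gs)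
    show "\<And>a b. ginv g x a b = ginv g x b a" using ginv_props(3)[of g x] gs pos by blast
    show "\<And>a c. (\<Sum>d\<in>UNIV. ginv g x a d * g x d c) = (if a = c then 1 else 0)"
      using ginv_props(1)[of g x] gs pos by blast
    show "\<And>a c. (\<Sum>d\<in>UNIV. g x a d * ginv g x d c) = (if a = c then 1 else 0)"
      using ginv_props(2)[of g x] gs pos by blast
    show "\<And>a c. (\<Sum>b\<in>UNIV. J x a b * J x b c) = (if a = c then -1 else 0)" by (rule JJx)
    show "\<And>b c. (\<Sum>d\<in>UNIV. g x b d * J x d c) = - (\<Sum>d\<in>UNIV. g x c d * J x d b)" by (rule om[OF x])
  qed
  define D where "D b c k = pd (\<lambda>y. J y b c) x k" for b c k
  define Dg where "Dg b c k = pd (\<lambda>y. g y b c) x k" for b c k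
  have covJ: "cov_J \<Gamma> J x = (\<lambda>k b c. D b c k + (\<Sum>d\<in>UNIV. \<Gamma> x b k d * J x d c) - (\<Sum>d\<in>UNIV. \<Gamma> x d k c * J x b d))"
    for \<Gamma> :: "real^'n \<Rightarrow> 'n \<Rightarrow> 'n \<Rightarrow> 'n \<Rightarrow> real"
    by (intro ext) (simp add: cov_J_def D_def)
  have dJJ: "(\<Sum>e\<in>UNIV. J x b e * D e c k + D b e k * J x e c) = 0" for k b c
  proof -
    have "pd (\<lambda>y. \<Sum>e\<in>UNIV. J y b e * J y e c) x k = (\<Sum>e\<in>UNIV. J x b e * D e c k + D b e k * J x e c)"
      unfolding D_def by (rule pd_sum_prod) (auto intro: dJ)
    moreover have "pd (\<lambda>y. \<Sum>e\<in>UNIV. J y b e * J y e c) x k = 0"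
      by (rule pd_const[OF openU x]) (use H in auto)
    ultimately show ?thesis by simp
  qed
  have P1: "P.P1 (cov_J \<Gamma> J x)" for \<Gamma> :: "real^'n \<Rightarrow> 'n \<Rightarrow> 'n \<Rightarrow> 'n \<Rightarrow> real"
    unfolding covJ by (rule P.P1_cov[OF dJJ])
  have weyl: "Dg b c k - (\<Sum>d\<in>UNIV. Gam x d k b * g x d c) - (\<Sum>d\<in>UNIV. Gam x d k c * g x b d) = 2 * B x k * g x b c"
    for k b c using wB x unfolding cov_g_def Dg_def by auto
  have dom: "(\<Sum>d\<in>UNIV. Dg b d k * J x d c + g x b d * D d c k) + (\<Sum>d\<in>UNIV. Dg c d k * J x d b + g x c d * D d b k) = 0"
    for k b c
  proof -
    have "pd (\<lambda>y. (\<Sum>d\<in>UNIV. g y b d * J y d c) + (\<Sum>d\<in>UNIV. g y c d * J y d b)) x k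
        = pd (\<lambda>y. \<Sum>d\<in>UNIV. g y b d * J y d c) x k + pd (\<lambda>y. \<Sum>d\<in>UNIV. g y c d * J y d b) x k"
      by (rule pd_add) (auto intro!: differentiable_sum differentiable_mult dg dJ)
    also have "\<dots> = (\<Sum>d\<in>UNIV. g x b d * D d c k + Dg b d k * J x d c) + (\<Sum>d\<in>UNIV. g x c d * D d b k + Dg c d k * J x d b)"
      unfolding D_def Dg_def by (subst pd_sum_prod, auto intro: dJ dg, subst pd_sum_prod, auto intro: dJ dg)
    finally have e: "pd (\<lambda>y. (\<Sum>d\<in>UNIV. g y b d * J y d c) + (\<Sum>d\<in>UNIV. g y c d * J y d b)) x k =
      (\<Sum>d\<in>UNIV. g x b d * D d c k + Dg b d k * J x d c) + (\<Sum>d\<in>UNIV. g x c d * D d b k + Dg c d k * J x d b)" .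
    have "pd (\<lambda>y. (\<Sum>d\<in>UNIV. g y b d * J y d c) + (\<Sum>d\<in>UNIV. g y c d * J y d b)) x k = 0"
      by (rule pd_const[OF openU x]) (simp add: om[of _ b c])
    then show ?thesis using e by (simp add: add.commute)
  qed
  have P2: "P.P2 (cov_J Gam J x)"
    unfolding covJ by (rule P.P2_cov[OF weyl dom])
  have ttf: "totally_trace_free g x H \<longleftrightarrow> P.ttf H" for H
    unfolding totally_trace_free_def P.ttf_def ..
  have th: "(\<forall>b. (\<Sum>a\<in>UNIV. cov_J Gam J x a a b) = 0) \<longleftrightarrow> (\<forall>b. P.th (cov_J Gam J x) b = 0)"
    unfolding P.th_def ..
  have Geq: "G_tensor Gam J x = P.Gt (cov_J Gam J x)"
    by (intro ext) (simp add: G_tensor_def P.Gt_def)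
  show "totally_trace_free g x (G_tensor Gam J x) \<longleftrightarrow> (\<forall>b. (\<Sum>a\<in>UNIV. cov_J Gam J x a a b) = 0)"
    unfolding ttf th Geq by (rule P.trG[OF P1 P2])
  show "totally_trace_free g x (JG_tensor Gam J x) \<longleftrightarrow> (\<forall>b. (\<Sum>a\<in>UNIV. cov_J Gam J x a a b) = 0)"
  proof -
    have "JG_tensor Gam J x = P.JGt (cov_J Gam J x)"
      by (intro ext) (simp add: JG_tensor_def P.JGt_def Geq)
    then show ?thesis unfolding ttf th by (simp add: P.trJG[OF P1 P2])
  qed
  show "totally_trace_free g x (GJ2_tensor Gam J x) \<longleftrightarrow> (\<forall>b. (\<Sum>a\<in>UNIV. cov_J Gam J x a a b) = 0)"
  proof -
    have "GJ2_tensor Gam J x = P.GJ2t (cov_J Gam J x)"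
      by (intro ext) (simp add: GJ2_tensor_def P.GJ2t_def Geq)
    then show ?thesis unfolding ttf th by (simp add: P.trGJ2[OF P1 P2])
  qed
  show "totally_trace_free g x (GJJ_tensor Gam J x) \<longleftrightarrow> (\<forall>b. (\<Sum>a\<in>UNIV. cov_J Gam J x a a b) = 0)"
  proof -
    have "GJJ_tensor Gam J x = P.GJJt (cov_J Gam J x)"
      by (intro ext) (simp add: GJJ_tensor_def P.GJJt_def Geq)
    then show ?thesis unfolding ttf th by (simp add: P.trGJJ[OF P1 P2])
  qed
  assume th0: "\<forall>b. (\<Sum>a\<in>UNIV. cov_J Gam J x a a b) = 0"
  have dgs: "Dg b c a = Dg c b a" for a b c
    unfolding Dg_def by (rule pd_cong[OF dg openU x]) (use H in auto)
  have kos: "Gam x e b c = lc_christoffel g x e b c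
     - B x b * (if e = c then 1 else 0) + (\<Sum>d\<in>UNIV. ginv g x e d * B x d) * g x b c - B x c * (if e = b then 1 else 0)"
    for e b c
    using P.koszul[of "Gam x" Dg "B x", OF _ dgs weyl] Gsym x
    unfolding lc_christoffel_def Dg_def by auto
  have thd: "P.th (cov_J Gam J x) c = P.th (cov_J (lc_christoffel g) J x) c - (real CARD('n) - 2) * (\<Sum>d\<in>UNIV. B x d * J x d c)"
    for c
  proof (rule P.thdiff[where C = "\<lambda>e b c. Gam x e b c - lc_christoffel g x e b c"])
    show "cov_J Gam J x k b c = cov_J (lc_christoffel g) J x k b c +
        (\<Sum>d\<in>UNIV. (Gam x b k d - lc_christoffel g x b k d) * J x d c) -
        (\<Sum>d\<in>UNIV. (Gam x d k c - lc_christoffel g x d k c) * J x b d)" for k b c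
      unfolding cov_J_def by (simp add: algebra_simps sum_subtractf)
    show "Gam x e b c - lc_christoffel g x e b c = - B x b * (if e = c then 1 else 0) - B x c * (if e = b then 1 else 0)
        + (\<Sum>d\<in>UNIV. ginv g x e d * B x d) * g x b c" for e b c
      using kos[of e b c] by simp
  qed
  have cB: "canon_B g J x a = B x a" for a
    unfolding canon_B_def
  proof (rule P.canonB_alg[OF P1])
    show "P.th (cov_J Gam J x) c = 0" for c using th0 unfolding P.th_def by simp
    show "P.th (cov_J Gam J x) c = P.th (cov_J (lc_christoffel g) J x) c - (real CARD('n) - 2) * (\<Sum>d\<in>UNIV. B x d * J x d c)"
      for c by (rule thd)
    show "real CARD('n) - 2 \<noteq> 0" using card by simp
  qed
  show "Gam x a b c = canon_christoffel g J x a b c"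
    unfolding canon_christoffel_def cB kos[of a b c] ..
qed


theorem lemma4p7:
  fixes U :: "(real^'n) set"
    and g J :: "real^'n \<Rightarrow> 'n \<Rightarrow> 'n \<Rightarrow> real"
    and Gam :: "real^'n \<Rightarrow> 'n \<Rightarrow> 'n \<Rightarrow> 'n \<Rightarrow> real"
  assumes "CARD('n) \<ge> 4"
    and "conformal_almost_hermitian U g J"
    and "weyl_connection U g Gam"
  shows "((\<forall>x\<in>U. \<forall>b. (\<Sum>a\<in>UNIV. cov_J Gam J x a a b) = 0) \<longleftrightarrow>
            (\<forall>x\<in>U. totally_trace_free g x (G_tensor Gam J x))) \<and>
         ((\<forall>x\<in>U. \<forall>b. (\<Sum>a\<in>UNIV. cov_J Gam J x a a b) = 0) \<longleftrightarrow>
            (\<forall>x\<in>U. totally_trace_free g x (JG_tensor Gam J x))) \<and>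
         ((\<forall>x\<in>U. \<forall>b. (\<Sum>a\<in>UNIV. cov_J Gam J x a a b) = 0) \<longleftrightarrow>
            (\<forall>x\<in>U. totally_trace_free g x (GJ2_tensor Gam J x))) \<and>
         ((\<forall>x\<in>U. \<forall>b. (\<Sum>a\<in>UNIV. cov_J Gam J x a a b) = 0) \<longleftrightarrow>
            (\<forall>x\<in>U. totally_trace_free g x (GJJ_tensor Gam J x))) \<and>
         ((\<forall>x\<in>U. \<forall>b. (\<Sum>a\<in>UNIV. cov_J Gam J x a a b) = 0) \<longrightarrow>
            (\<forall>x\<in>U. \<forall>a b c. Gam x a b c = canon_christoffel g J x a b c))"
proof -
  have Gsym: "\<forall>x\<in>U. \<forall>a b c. Gam x a b c = Gam x a c b"
    using assms(3) unfolding weyl_connection_def by blast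
  obtain B where wB: "\<forall>x\<in>U. \<forall>a b c. cov_g Gam g x a b c = 2 * B x a * g x b c"
    using assms(3) unfolding weyl_connection_def by blast
  note pw = pointwise[OF assms(1) assms(2) Gsym wB]
  have p1: "(\<forall>x\<in>U. \<forall>b. (\<Sum>a\<in>UNIV. cov_J Gam J x a a b) = 0) \<longleftrightarrow>
            (\<forall>x\<in>U. totally_trace_free g x (G_tensor Gam J x))" using pw(1) by blast
  have p2: "(\<forall>x\<in>U. \<forall>b. (\<Sum>a\<in>UNIV. cov_J Gam J x a a b) = 0) \<longleftrightarrow>
            (\<forall>x\<in>U. totally_trace_free g x (JG_tensor Gam J x))" using pw(2) by blast
  have p3: "(\<forall>x\<in>U. \<forall>b. (\<Sum>a\<in>UNIV. cov_J Gam J x a a b) = 0) \<longleftrightarrow>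
            (\<forall>x\<in>U. totally_trace_free g x (GJ2_tensor Gam J x))" using pw(3) by blast
  have p4: "(\<forall>x\<in>U. \<forall>b. (\<Sum>a\<in>UNIV. cov_J Gam J x a a b) = 0) \<longleftrightarrow>
            (\<forall>x\<in>U. totally_trace_free g x (GJJ_tensor Gam J x))" using pw(4) by blast
  have p5: "(\<forall>x\<in>U. \<forall>b. (\<Sum>a\<in>UNIV. cov_J Gam J x a a b) = 0) \<longrightarrow>
            (\<forall>x\<in>U. \<forall>a b c. Gam x a b c = canon_christoffel g J x a b c)"
    using pw(5) by blast
  show ?thesis using p1 p2 p3 p4 p5 by blast
qed

end
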